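(* Let $n\ge 2$ be an integer and let $n_0,n_1$ be integers with $n=n_0+n_1$. The following are equivalent: (1) $(n_0,n_1)$ is a hypercubic bipartition (HCBP) of $n$; (2) $f(n)=n_1+f(n_1)+f(n_0)$ and $n_0\ge n_1\ge 1$; (3) $(n_0,n_1)=\left(\frac{n+d_i(n)}{2},\frac{n-d_i(n)}{2}\right)$ for some $i\in\{1,\dots,\lceil\log_2 n\rceil\}$.
   Context: Let $f:\mathbb{N}\to\mathbb{N}_0$ be defined by $f(1)=0$ and $f(n)=\lfloor n/2\rfloor+f(\lfloor n/2\rfloor)+f(\lceil n/2\rceil)$ for $n>1$. For $i\in\mathbb{N}$ and $n\in\mathbb{N}_0$ let $d_i(n)=2^{i-1}-\left|(n\bmod 2^i)-2^{i-1}\right|$. For $k\ge 0$ and $0\le m<2^k$, let $\beta_k(m)\in\{0,1\}^k$ be the point whose $j$-th coordinate is the binary digit of $m$ of weight $2^{k-j}$. For $n\ge 2$ put $k=\lceil\log_2 n\rceil$. A pair $(n_0,n_1)$ of integers with $n=n_0+n_1$ and $n_0\ge n_1\ge 1$ is a hypercubic bipartition (HCBP) of $n$ if there is $i\in\{1,\dots,k\}$ such that the hyperplane $x_i=1/2$ splits the $n$ points $\beta_k(0),\dots,\beta_k(n-1)$ into $n_0$ points on one side and $n_1$ on the other. *)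

theory Defs
  imports Complex_Main
begin

fun f :: "nat \<Rightarrow> nat" where
  "f n = (if n \<le> 1 then 0 else n div 2 + f (n div 2) + f (n - n div 2))"

text \<open>For n > 1, n - n div 2 is the ceiling of n/2. The value f 0 is irrelevant (set to 0).\<close>

definition d :: "nat \<Rightarrow> nat \<Rightarrow> int" where
  "d i n = 2^(i-1) - \<bar>int (n mod 2^i) - 2^(i-1)\<bar>"

text \<open>j-th coordinate (1 <= j <= k) of beta_k(m): binary digit of m of weight 2^(k-j).\<close>
definition beta :: "nat \<Rightarrow> nat \<Rightarrow> nat \<Rightarrow> nat" where
  "beta k m j = (m div 2^(k - j)) mod 2"

definition clog2 :: "nat \<Rightarrow> nat" where
  "clog2 n = nat \<lceil>log 2 (real n)\<rceil>"

text \<open>The hyperplane x_i = 1/2 splits the points into those with coordinate 0 and with 1;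
  the sides are unordered.\<close>
definition HCBP :: "nat \<Rightarrow> int \<Rightarrow> int \<Rightarrow> bool" where
  "HCBP n n0 n1 \<longleftrightarrow> int n = n0 + n1 \<and> n0 \<ge> n1 \<and> n1 \<ge> 1 \<and>
     (\<exists>i\<in>{1..clog2 n}.
        let A = {m. m < n \<and> beta (clog2 n) m i = 0};
            B = {m. m < n \<and> beta (clog2 n) m i = 1}
        in (int (card A) = n0 \<and> int (card B) = n1) \<or> (int (card A) = n1 \<and> int (card B) = n0))"

end

theory Submission
  imports Defs
begin

lemma f01[simp]: "f 0 = 0" "f (Suc 0) = 0"
  by (subst f.simps, simp)+

declare f.simps[simp del]


definition ones :: "nat \<Rightarrow> nat \<Rightarrow> nat" where
  "ones j n = card {m. m < n \<and> (m div 2^j) mod 2 = 1}"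

lemma ones_Suc: "ones j (Suc n) = ones j n + (if (n div 2^j) mod 2 = 1 then 1 else 0)"
proof -
  have "{m. m < Suc n \<and> (m div 2^j) mod 2 = 1} =
        {m. m < n \<and> (m div 2^j) mod 2 = 1} \<union> (if (n div 2^j) mod 2 = 1 then {n} else {})"
    by (auto simp: less_Suc_eq)
  then show ?thesis unfolding ones_def by auto
qed

lemma bit_iff: "((n::nat) div 2^j) mod 2 = 1 \<longleftrightarrow> 2^j \<le> n mod 2^(Suc j)"
proof -
  have e: "n mod (2^j*2) = 2^j * ((n div 2^j) mod 2) + n mod 2^j" by (rule mod_mult2_eq)
  have l: "n mod 2^j < 2^j" by simp
  show ?thesis
  proof (cases "(n div 2^j) mod 2 = 1")
    case True
    then have "n mod 2^(Suc j) = 2^j + n mod 2^j" using e by (simp add: mult.commute)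
    then show ?thesis using True by simp
  next
    case False
    then have "(n div 2^j) mod 2 = 0" by auto
    then have "n mod 2^(Suc j) = n mod 2^j" using e by (simp add: mult.commute)
    then have "\<not> 2^j \<le> n mod 2^(Suc j)" using l by linarith
    then show ?thesis using False by simp
  qed
qed

lemma d_Suc:
  "d (Suc j) (Suc n) = d (Suc j) n + (if (n div 2^j) mod 2 = 1 then -1 else 1)"
proof -
  define h :: nat where "h = 2^j"
  have M: "(2::nat)^(Suc j) = 2*h" unfolding h_def by simp
  have hpos: "h > 0" unfolding h_def by simp
  define r where "r = n mod (2*h)"
  have rl: "r < 2*h" unfolding r_def using hpos by simp
  have r': "Suc n mod (2*h) = (if r = 2*h - 1 then 0 else r + 1)"
    unfolding r_def using hpos by (auto simp add: mod_Suc)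
  have b: "(n div 2^j) mod 2 = 1 \<longleftrightarrow> h \<le> r" using bit_iff[of n j] unfolding r_def h_def by simp
  have dn: "d (Suc j) n = int h - \<bar>int r - int h\<bar>" unfolding d_def r_def h_def by simp
  have dn': "d (Suc j) (Suc n) = int h - \<bar>int (Suc n mod (2*h)) - int h\<bar>"
    unfolding d_def h_def by simp
  show ?thesis using b dn dn' r' rl hpos by auto
qed

lemma ones_d: "2 * int (ones j n) = int n - d (Suc j) n"
proof (induction n)
  case 0 then show ?case unfolding ones_def d_def by simp
next
  case (Suc n) then show ?case using ones_Suc[of j n] d_Suc[of j n] by auto
qed

lemma d_nonneg: "d i n \<ge> 0"
proof -
  show ?thesis
  proof (cases i)
    case 0 then show ?thesis unfolding d_def by simp
  next
    case (Suc m)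
    have a: "n mod (2*2^m) < 2*2^m" by simp
    have "int (n mod (2*2^m)) < int (2*2^m)" using a by (simp only: of_nat_less_iff)
    then have "int (n mod (2*2^m)) < 2*2^m" by simp
    then show ?thesis unfolding d_def using Suc by (auto simp: abs_if)
  qed
qed

lemma f_even: "f (2*m) = m + 2 * f m"
proof (cases "m = 0")
  case True then show ?thesis by (subst f.simps) simp
next
  case False then show ?thesis by (subst f.simps) simp
qed

lemma f_odd: "f (2*m+1) = m + f m + f (m+1)"
proof (cases "m = 0")
  case True then show ?thesis by (subst f.simps) simp
next
  case False then show ?thesis by (subst f.simps) simp
qed

definition g :: "nat \<Rightarrow> nat \<Rightarrow> int" where
  "g a b = int (f (a+b)) - int (f a) - int (f b) - int (min a b)"

lemma g_sym: "g a b = g b a"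
  unfolding g_def by (simp add: add.commute min.commute)

lemma g_ee: "g (2*x) (2*y) = 2 * g x y"
proof -
  have "2*x+2*y = 2*(x+y)" by simp
  then show ?thesis unfolding g_def using f_even[of "x+y"] f_even[of x] f_even[of y]
    by (simp add: min_def)
qed

lemma g_oo: "g (2*x+1) (2*y+1) = g (x+1) y + g x (y+1) + (if x = y then 0 else 1)"
proof -
  have "2*x+1+(2*y+1) = 2*(x+y+1)" by simp
  then show ?thesis unfolding g_def using f_even[of "x+y+1"] f_odd[of x] f_odd[of y]
    by (auto simp add: min_def)
qed

lemma g_eo: "g (2*x) (2*y+1) = g x y + g x (y+1)"
proof -
  have "2*x+(2*y+1) = 2*(x+y)+1" by simp
  then show ?thesis unfolding g_def using f_odd[of "x+y"] f_even[of x] f_odd[of y]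
    by (auto simp add: min_def)
qed

lemma g_adj: "g (x+1) x = 0"
proof -
  have "x+1+x = 2*x+1" by simp
  then have "f (x+1+x) = x + f x + f (x+1)" using f_odd[of x] by (simp only:)
  then show ?thesis unfolding g_def by (simp add: min_def)
qed


definition P :: "nat \<Rightarrow> nat \<Rightarrow> bool" where
  "P a b \<longleftrightarrow> (\<exists>t. (2^t dvd a \<or> 2^t dvd b) \<and> a \<le> b + 2^t \<and> b \<le> a + 2^t)"

lemma P_sym: "P a b = P b a"
  unfolding P_def by blast

lemma P_ee: "P (2*x) (2*y) \<longleftrightarrow> P x y"
proof
  assume "P (2*x) (2*y)"
  then obtain t where t: "2^t dvd 2*x \<or> 2^t dvd 2*y" "2*x \<le> 2*y + 2^t" "2*y \<le> 2*x + 2^t"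
    unfolding P_def by blast
  show "P x y"
  proof (cases t)
    case 0
    then have "x = y" using t by simp
    then show ?thesis unfolding P_def by (intro exI[of _ 0]) simp
  next
    case (Suc s)
    then have "2^s dvd x \<or> 2^s dvd y" using t(1) by simp
    moreover have "x \<le> y + 2^s" "y \<le> x + 2^s" using t Suc by simp_all
    ultimately show ?thesis unfolding P_def by blast
  qed
next
  assume "P x y"
  then obtain t where t: "2^t dvd x \<or> 2^t dvd y" "x \<le> y + 2^t" "y \<le> x + 2^t"
    unfolding P_def by blast
  then show "P (2*x) (2*y)" unfolding P_def
    by (intro exI[of _ "Suc t"]) auto
qed

lemma P_oo: "P (2*x+1) (2*y+1) \<longleftrightarrow> x = y"
proof
  assume "P (2*x+1) (2*y+1)"
  then obtain t where t: "2^t dvd 2*x+1 \<or> 2^t dvd 2*y+1" "2*x+1 \<le> 2*y+1 + 2^t" "2*y+1 \<le> 2*x+1 + 2^t"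
    unfolding P_def by blast
  have "t = 0"
  proof (rule ccontr)
    assume "t \<noteq> 0"
    then have "(2::nat) dvd 2^t" by simp
    then show False using t(1) by (meson dvd_trans even_mult_iff odd_one dvd_add_right_iff dvd_triv_left)
  qed
  then show "x = y" using t by simp
next
  assume "x = y" then show "P (2*x+1) (2*y+1)" unfolding P_def by (intro exI[of _ 0]) simp
qed


lemma even_of_pow_dvd: "2^t dvd (y::nat) \<Longrightarrow> t \<noteq> 0 \<Longrightarrow> even y"
  by (metis dvd_power dvd_trans not_gr0)

lemma P_eo_aux1:
  assumes "P x y" "P x (y+1)" "y + 2 \<le> x"
  shows "\<exists>u. 2^u dvd x \<and> x \<le> y + 2^u"
proof -
  obtain t1 where t1: "2^t1 dvd x \<or> 2^t1 dvd y" "x \<le> y + 2^t1"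
    using assms(1) unfolding P_def by blast
  obtain t2 where t2: "2^t2 dvd x \<or> 2^t2 dvd (y+1)" "x \<le> y + 1 + 2^t2"
    using assms(2) unfolding P_def by blast
  show ?thesis
  proof (cases "2^t1 dvd x")
    case True then show ?thesis using t1 by blast
  next
    case False
    then have d1: "2^t1 dvd y" using t1 by blast
    have "t1 \<noteq> 0" proof assume "t1 = 0" then show False using t1(2) assms(3) by simp qed
    then have ey: "even y" using d1 even_of_pow_dvd by blast
    have key: "x = y + 2 \<or> (2^t2 dvd x \<and> x \<le> y + 2^t2)"
    proof (cases "2^t2 dvd x")
      case True
      show ?thesis
      proof (cases "x \<le> y + 2^t2")
        case True then show ?thesis using \<open>2^t2 dvd x\<close> by blast
      next
        case False
        then have xe: "x = y + 1 + 2^t2" using t2 by simp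
        have "t2 = 0"
        proof (rule ccontr)
          assume "t2 \<noteq> 0"
          then have "even x" using True even_of_pow_dvd by blast
          moreover have "even (2^t2::nat)" using \<open>t2 \<noteq> 0\<close> by simp
          ultimately show False using xe ey by simp
        qed
        then show ?thesis using xe by simp
      qed
    next
      case False
      then have "2^t2 dvd (y+1)" using t2 by blast
      then have "t2 = 0" using ey even_of_pow_dvd[of t2 "y+1"] by auto
      then show ?thesis using t2 assms(3) by simp
    qed
    then show ?thesis
    proof
      assume "x = y + 2"
      then have "2^1 dvd x" using ey by simp
      then show ?thesis using \<open>x = y + 2\<close> by (intro exI[of _ 1]) simp
    qed blast
  qed
qed

lemma P_eo_aux2:
  assumes "P x y" "P x (y+1)" "x < y"
  shows "\<exists>u. 2^u dvd x \<and> y + 1 \<le> x + 2^u"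
proof -
  obtain t1 where t1: "2^t1 dvd x \<or> 2^t1 dvd y" "y \<le> x + 2^t1"
    using assms(1) unfolding P_def by blast
  obtain t2 where t2: "2^t2 dvd x \<or> 2^t2 dvd (y+1)" "y + 1 \<le> x + 2^t2"
    using assms(2) unfolding P_def by blast
  show ?thesis
  proof (cases "2^t2 dvd x")
    case True then show ?thesis using t2 by blast
  next
    case False
    then have d2: "2^t2 dvd (y+1)" using t2 by blast
    have "t2 \<noteq> 0" proof assume "t2 = 0" then show False using t2(2) assms(3) by simp qed
    then have ey: "even (y+1)" using d2 even_of_pow_dvd by blast
    have key: "y = x + 1 \<or> (2^t1 dvd x \<and> y + 1 \<le> x + 2^t1)"
    proof (cases "2^t1 dvd x")
      case True
      show ?thesis
      proof (cases "y + 1 \<le> x + 2^t1")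
        case True then show ?thesis using \<open>2^t1 dvd x\<close> by blast
      next
        case False
        then have ye: "y = x + 2^t1" using t1 by simp
        have "t1 = 0"
        proof (rule ccontr)
          assume "t1 \<noteq> 0"
          then have "even x" using True even_of_pow_dvd by blast
          moreover have "even (2^t1::nat)" using \<open>t1 \<noteq> 0\<close> by simp
          ultimately show False using ye ey by simp
        qed
        then show ?thesis using ye by simp
      qed
    next
      case False
      then have "2^t1 dvd y" using t1 by blast
      then have "t1 = 0" using ey even_of_pow_dvd[of t1 y] by auto
      then show ?thesis using t1 assms(3) by simp
    qed
    then show ?thesis
    proof
      assume "y = x + 1"
      then have "2^1 dvd x" using ey by simp
      then show ?thesis using \<open>y = x + 1\<close> by (intro exI[of _ 1]) simp
    qed blast
  qed
qed

lemma P_eo: "P (2*x) (2*y+1) \<longleftrightarrow> P x y \<and> P x (y+1)"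
proof
  assume "P (2*x) (2*y+1)"
  then obtain t where t: "2^t dvd 2*x \<or> 2^t dvd 2*y+1" "2*x \<le> 2*y+1 + 2^t" "2*y+1 \<le> 2*x + 2^t"
    unfolding P_def by blast
  show "P x y \<and> P x (y+1)"
  proof (cases t)
    case 0
    then have "y \<le> x" "x \<le> y + 1" using t by simp_all
    then show ?thesis unfolding P_def by (intro conjI exI[of _ 0]) auto
  next
    case (Suc s)
    have "\<not> 2^t dvd 2*y+1" using Suc even_of_pow_dvd[of t "2*y+1"] by auto
    then have "2^s dvd x" using t(1) Suc by simp
    moreover have "x \<le> y + 2^s" "y + 1 \<le> x + 2^s" using t Suc by simp_all
    ultimately show ?thesis unfolding P_def by (intro conjI exI[of _ s]) auto
  qed
next
  assume a: "P x y \<and> P x (y+1)"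
  consider "y \<le> x \<and> x \<le> y + 1" | "y + 2 \<le> x" | "x < y" by linarith
  then show "P (2*x) (2*y+1)"
  proof cases
    case 1 then show ?thesis unfolding P_def by (intro exI[of _ 0]) auto
  next
    case 2
    then obtain u where "2^u dvd x" "x \<le> y + 2^u" using P_eo_aux1 a by blast
    then show ?thesis using 2 unfolding P_def by (intro exI[of _ "Suc u"]) auto
  next
    case 3
    then obtain u where "2^u dvd x" "y + 1 \<le> x + 2^u" using P_eo_aux2 a by blast
    then show ?thesis using 3 unfolding P_def by (intro exI[of _ "Suc u"]) auto
  qed
qed


lemma P_00: "P 0 b \<longleftrightarrow> True"
proof -
  have "b < 2^b" by simp
  then show ?thesis unfolding P_def by (intro iffI TrueI exI[of _ b]) auto
qed

lemma g_0: "g 0 b = 0" unfolding g_def by simp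

lemma main_g: "0 \<le> g a b \<and> (g a b = 0 \<longleftrightarrow> P a b)"
proof (induction "a+b" arbitrary: a b rule: less_induct)
  case less
  show ?case
  proof (cases "a = 0 \<or> b = 0")
    case True
    then show ?thesis using g_0[of b] P_00[of b] g_0[of a] P_00[of a] g_sym[of a b] P_sym[of a b] by auto
  next
    case False
    then have a0: "a > 0" "b > 0" by auto
    obtain x where ax: "a = 2*x \<or> a = 2*x+1" by (metis dvd_mult_div_cancel odd_two_times_div_two_succ)
    obtain y where bx: "b = 2*y \<or> b = 2*y+1" by (metis dvd_mult_div_cancel odd_two_times_div_two_succ)
    consider "a = 2*x" "b = 2*y" | "a = 2*x+1" "b = 2*y+1" | "a = 2*x" "b = 2*y+1" | "a = 2*x+1" "b = 2*y"
      using ax bx by blast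
    then show ?thesis
    proof cases
      case 1
      then have "x + y < a + b" using a0 by simp
      then show ?thesis using less[of x y] 1 g_ee P_ee by simp
    next
      case 2
      have h1: "0 \<le> g (x+1) y \<and> (g (x+1) y = 0 \<longleftrightarrow> P (x+1) y)" using less(1)[of "x+1" y] 2 by simp
      have h2: "0 \<le> g x (y+1) \<and> (g x (y+1) = 0 \<longleftrightarrow> P x (y+1))" using less(1)[of x "y+1"] 2 by simp
      have "g x (x+1) = 0" using g_adj g_sym by metis
      then show ?thesis using 2 g_oo[of x y] P_oo[of x y] h1 h2 g_adj[of x] by auto
    next
      case 3
      have h1: "0 \<le> g x y \<and> (g x y = 0 \<longleftrightarrow> P x y)" using less(1)[of x y] 3 a0 by simp
      have h2: "0 \<le> g x (y+1) \<and> (g x (y+1) = 0 \<longleftrightarrow> P x (y+1))" using less(1)[of x "y+1"] 3 a0 by simp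
      then show ?thesis using 3 g_eo[of x y] P_eo[of x y] h1 h2 by auto
    next
      case 4
      have h1: "0 \<le> g y x \<and> (g y x = 0 \<longleftrightarrow> P y x)" using less(1)[of y x] 4 a0 by simp
      have h2: "0 \<le> g y (x+1) \<and> (g y (x+1) = 0 \<longleftrightarrow> P y (x+1))" using less(1)[of y "x+1"] 4 a0 by simp
      then show ?thesis using 4 g_eo[of y x] P_eo[of y x] h1 h2 g_sym[of a b] P_sym[of a b] by auto
    qed
  qed
qed


lemma clog2_bounds:
  assumes "n \<ge> 2"
  shows "clog2 n \<ge> 1" "2^(clog2 n - 1) < n" "n \<le> 2^(clog2 n)"
proof -
  define L where "L = log 2 (real n)"
  have np: "real n > 0" using assms by simp
  have Lp: "L > 0" unfolding L_def using assms by simp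
  define c where "c = \<lceil>L\<rceil>"
  have "L \<le> of_int c" unfolding c_def by (rule le_of_int_ceiling)
  then have "of_int c > (0::real)" using Lp by linarith
  then have c1: "c \<ge> 1" by simp
  have k: "int (clog2 n) = c" unfolding clog2_def c_def L_def using c1 c_def L_def by simp
  then show "clog2 n \<ge> 1" using c1 by simp
  have "L \<le> real (clog2 n)" using k unfolding c_def by (metis le_of_int_ceiling of_int_of_nat_eq)
  then have "real n \<le> 2 powr real (clog2 n)" unfolding L_def using log_le_iff[of 2 "real n"] np by simp
  then have "real n \<le> 2 ^ (clog2 n)" by (simp add: powr_realpow)
  then show "n \<le> 2^(clog2 n)" by (metis of_nat_le_iff of_nat_numeral of_nat_power)
  have "real (clog2 n - 1) < L"
  proof (rule ccontr)
    assume "\<not> real (clog2 n - 1) < L"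
    then have "L \<le> of_int (int (clog2 n - 1))" by simp
    then have "c \<le> int (clog2 n - 1)" unfolding c_def by (rule ceiling_le)
    then show False using k c1 by simp
  qed
  then have "2 powr real (clog2 n - 1) < real n" unfolding L_def using less_log_iff[of 2 "real n"] np by simp
  then have "2 ^ (clog2 n - 1) < real n" by (simp add: powr_realpow)
  then show "2^(clog2 n - 1) < n" by (metis of_nat_less_iff of_nat_numeral of_nat_power)
qed


lemma d_repr:
  assumes "n = 2*Q + r" "r < 2*2^t" "2^t dvd Q"
  shows "d (Suc t) n = int (2^t) - \<bar>int r - int (2^t)\<bar>"
proof -
  obtain q where q: "Q = 2^t * q" using assms(3) by blast
  have "n = r + q * 2^(Suc t)" using assms(1) q by simp
  then have "n mod 2^(Suc t) = r" using assms(2) by simp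
  then show ?thesis unfolding d_def by simp
qed

lemma P_to_d:
  assumes "1 \<le> b" "b \<le> a" "a + b \<le> 2^k" "P a b"
  shows "\<exists>i\<in>{1..k}. int a - int b = d i (a+b)"
proof -
  obtain t where t: "2^t dvd a \<or> 2^t dvd b" "a \<le> b + 2^t" "b \<le> a + 2^t"
    using assms(4) unfolding P_def by blast
  have tk: "t < k"
  proof -
    have "2^t \<le> a \<or> 2^t \<le> b" using t(1) assms(1,2) by (meson dvd_imp_le le_trans less_le_trans zero_less_one)
    then have "2^t < (2::nat)^k" using assms by linarith
    then show ?thesis using power_less_imp_less_exp by fastforce
  qed
  have ti: "int a \<le> int b + 2^t" using t(2) by (metis of_nat_add of_nat_le_iff of_nat_numeral of_nat_power)
  have "int a - int b = d (Suc t) (a+b)"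
  proof (cases "2^t dvd b")
    case True
    have pp: "(0::nat) < 2^t" by simp
    have "a + b = 2*b + (a-b)" "a - b < 2*2^t" using assms t pp by linarith+
    then have "d (Suc t) (a+b) = int (2^t) - \<bar>int (a-b) - int (2^t)\<bar>"
      using d_repr True by blast
    then show ?thesis using ti assms by simp
  next
    case False
    then have da: "2^t dvd a" using t by blast
    show ?thesis
    proof (cases "a = b")
      case True
      have "a + b = 2*a + 0" using True by simp
      then have "d (Suc t) (a+b) = int (2^t) - \<bar>int 0 - int (2^t)\<bar>"
        using d_repr[of "a+b" a 0 t] da by simp
      then show ?thesis using True by simp
    next
      case False
      then have ab: "b < a" using assms by simp
      have "2^t \<le> a" using da assms by (simp add: dvd_imp_le)
      then have e: "a + b = 2*(a - 2^t) + (2*2^t - (a - b))" "2*2^t - (a-b) < 2*2^t"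
        using ab t by auto
      have "2^t dvd (a - 2^t)" using da by (simp add: dvd_diff_nat)
      then have "d (Suc t) (a+b) = int (2^t) - \<bar>int (2*2^t - (a-b)) - int (2^t)\<bar>"
        using d_repr e by blast
      moreover have "int (2*2^t - (a-b)) = 2*2^t - (int a - int b)" using t(2) ab by (simp add: of_nat_diff)
      ultimately show ?thesis using ti ab by simp
    qed
  qed
  then show ?thesis using tk by (intro bexI[of _ "Suc t"]) auto
qed

lemma d_to_P:
  assumes "i \<ge> 1" "int a - int b = d i (a+b)"
  shows "P a b"
proof -
  obtain t where ti: "i = Suc t" using assms(1) by (cases i) auto
  define h :: nat where "h = 2^t"
  define n where "n = a + b"
  define q where "q = n div (2*h)"
  define r where "r = n mod (2*h)"
  have hp: "h > 0" unfolding h_def by simp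
  have nqr: "n = 2*(q*h) + r" unfolding q_def r_def by (metis mult.assoc mult.commute div_mult_mod_eq)
  have rl: "r < 2*h" unfolding r_def using hp by simp
  have dd: "d i n = int h - \<bar>int r - int h\<bar>" unfolding d_def ti h_def r_def by simp
  have hd: "2^t dvd (q*h)" unfolding h_def by simp
  show ?thesis
  proof (cases "r \<le> h")
    case True
    then have "int a - int b = int r" using assms(2) dd unfolding n_def by simp
    then have "b = q*h" "a = q*h + r" using nqr unfolding n_def by linarith+
    then show ?thesis unfolding P_def using hd True unfolding h_def by (intro exI[of _ t]) auto
  next
    case False
    then have "int a - int b = 2*int h - int r" using assms(2) dd unfolding n_def by simp
    then have "a = q*h + h" "b + (2*h - r) = a" using nqr rl unfolding n_def by linarith+
    moreover have "2^t dvd (q*h + h)" using hd unfolding h_def by simp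
    ultimately show ?thesis unfolding P_def using False unfolding h_def by (intro exI[of _ t]) auto
  qed
qed


lemma card_AB:
  "card {m. m < n \<and> beta k m i = 0} + card {m. m < n \<and> beta k m i = 1} = n"
  "int (card {m. m < n \<and> beta k m i = 0}) - int (card {m. m < n \<and> beta k m i = 1}) = d (Suc (k-i)) n"
proof -
  let ?A = "{m. m < n \<and> beta k m i = 0}"
  let ?B = "{m. m < n \<and> beta k m i = 1}"
  have u: "?A \<union> ?B = {..<n}" unfolding beta_def by auto
  have "?A \<inter> ?B = {}" by auto
  then have "card ?A + card ?B = card {..<n}" using u card_Un_disjoint[of ?A ?B] by simp
  then show c: "card ?A + card ?B = n" by simp
  have "card ?B = ones (k-i) n" unfolding ones_def beta_def by simp
  then have "2 * int (card ?B) = int n - d (Suc (k-i)) n" using ones_d by simp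
  then show "int (card ?A) - int (card ?B) = d (Suc (k-i)) n" using c by linarith
qed

lemma HCBP_iff:
  assumes "int n = n0 + n1"
  shows "HCBP n n0 n1 \<longleftrightarrow> n0 \<ge> n1 \<and> n1 \<ge> 1 \<and> (\<exists>i\<in>{1..clog2 n}. n0 - n1 = d i n)"
proof
  assume h: "HCBP n n0 n1"
  let ?k = "clog2 n"
  obtain i where i: "i \<in> {1..?k}" and
    c: "(int (card {m. m < n \<and> beta ?k m i = 0}) = n0 \<and> int (card {m. m < n \<and> beta ?k m i = 1}) = n1) \<or>
        (int (card {m. m < n \<and> beta ?k m i = 0}) = n1 \<and> int (card {m. m < n \<and> beta ?k m i = 1}) = n0)"
    using h unfolding HCBP_def Let_def by blast
  have ge: "n0 \<ge> n1" "n1 \<ge> 1" using h unfolding HCBP_def by auto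
  have D: "int (card {m. m < n \<and> beta ?k m i = 0}) - int (card {m. m < n \<and> beta ?k m i = 1}) = d (Suc (?k-i)) n"
    by (rule card_AB(2))
  have "n0 - n1 = d (Suc (?k-i)) n" using c D ge d_nonneg[of "Suc (?k-i)" n] by auto
  moreover have "Suc (?k-i) \<in> {1..?k}" using i by auto
  ultimately show "n0 \<ge> n1 \<and> n1 \<ge> 1 \<and> (\<exists>i\<in>{1..clog2 n}. n0 - n1 = d i n)" using ge by blast
next
  assume h: "n0 \<ge> n1 \<and> n1 \<ge> 1 \<and> (\<exists>i\<in>{1..clog2 n}. n0 - n1 = d i n)"
  let ?k = "clog2 n"
  obtain i' where i': "i' \<in> {1..?k}" "n0 - n1 = d i' n" using h by blast
  define i where "i = Suc ?k - i'"
  have ii: "i \<in> {1..?k}" "Suc (?k - i) = i'" using i' unfolding i_def by auto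
  have D: "int (card {m. m < n \<and> beta ?k m i = 0}) - int (card {m. m < n \<and> beta ?k m i = 1}) = d (Suc (?k-i)) n"
    by (rule card_AB(2))
  have S: "card {m. m < n \<and> beta ?k m i = 0} + card {m. m < n \<and> beta ?k m i = 1} = n"
    by (rule card_AB(1))
  have "int (card {m. m < n \<and> beta ?k m i = 0}) = n0 \<and> int (card {m. m < n \<and> beta ?k m i = 1}) = n1"
  proof -
    have e1: "d (Suc (?k-i)) n = d i' n" using ii(2) by simp
    have e2: "int (card {m. m < n \<and> beta ?k m i = 0}) + int (card {m. m < n \<and> beta ?k m i = 1}) = int n"
      using S by (metis of_nat_add)
    show ?thesis using D e1 e2 i'(2) assms by linarith
  qed
  then show "HCBP n n0 n1" unfolding HCBP_def Let_def using h assms ii(1) by blast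
qed

lemma d_le: "i \<ge> 1 \<Longrightarrow> d i n \<le> 2^(i-1)"
  unfolding d_def by simp

theorem theorem13:
  fixes n :: nat and n0 n1 :: int
  assumes "n \<ge> 2" and "int n = n0 + n1"
  shows "(HCBP n n0 n1 \<longleftrightarrow>
           (int (f n) = n1 + int (f (nat n1)) + int (f (nat n0)) \<and> n0 \<ge> n1 \<and> n1 \<ge> 1))
       \<and> (HCBP n n0 n1 \<longleftrightarrow>
           (\<exists>i\<in>{1..clog2 n}. real_of_int n0 = (real n + real_of_int (d i n)) / 2
                           \<and> real_of_int n1 = (real n - real_of_int (d i n)) / 2))"
proof -
  let ?k = "clog2 n"
  have kb: "?k \<ge> 1" "2^(?k - 1) < n" "n \<le> 2^?k" using clog2_bounds assms(1) by auto
  define S3 where "S3 = (\<exists>i\<in>{1..?k}. n0 - n1 = d i n)"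
  have rn: "real n = real_of_int n0 + real_of_int n1" using assms(2) by (metis of_int_add of_int_of_nat_eq)
  have eq3: "(\<exists>i\<in>{1..?k}. real_of_int n0 = (real n + real_of_int (d i n)) / 2
                           \<and> real_of_int n1 = (real n - real_of_int (d i n)) / 2) \<longleftrightarrow> S3"
    unfolding S3_def
  proof (intro bex_cong refl iffI)
    fix i
    assume "real_of_int n0 = (real n + real_of_int (d i n)) / 2 \<and> real_of_int n1 = (real n - real_of_int (d i n)) / 2"
    then have "real_of_int n0 - real_of_int n1 = real_of_int (d i n)" using rn by (elim conjE) simp
    then have "real_of_int (n0 - n1) = real_of_int (d i n)" by (simp only: of_int_diff)
    then show "n0 - n1 = d i n" by (simp only: of_int_eq_iff)
  next
    fix i
    assume "n0 - n1 = d i n"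
    then have "real_of_int n0 - real_of_int n1 = real_of_int (d i n)" by (metis of_int_diff)
    then show "real_of_int n0 = (real n + real_of_int (d i n)) / 2 \<and> real_of_int n1 = (real n - real_of_int (d i n)) / 2"
      using rn by (simp add: field_simps)
  qed
  have S3_ge: "S3 \<Longrightarrow> n0 \<ge> n1 \<and> n1 \<ge> 1"
  proof -
    assume S3
    then obtain i where i: "i \<in> {1..?k}" "n0 - n1 = d i n" unfolding S3_def by blast
    have "d i n \<le> 2^(i-1)" using d_le i by simp
    also have "(2::int)^(i-1) \<le> 2^(?k-1)" using i by (intro power_increasing) auto
    also have "(2::int)^(?k-1) < int n" using kb(2) by (metis of_nat_less_iff of_nat_numeral of_nat_power)
    finally have "d i n < int n" .
    then show "n0 \<ge> n1 \<and> n1 \<ge> 1" using i d_nonneg[of i n] assms(2) by linarith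
  qed
  have H: "HCBP n n0 n1 \<longleftrightarrow> S3"
    using HCBP_iff[OF assms(2)] S3_ge unfolding S3_def by blast
  have F: "(int (f n) = n1 + int (f (nat n1)) + int (f (nat n0)) \<and> n0 \<ge> n1 \<and> n1 \<ge> 1) \<longleftrightarrow> S3"
  proof
    assume h: "int (f n) = n1 + int (f (nat n1)) + int (f (nat n0)) \<and> n0 \<ge> n1 \<and> n1 \<ge> 1"
    define a where "a = nat n0"
    define b where "b = nat n1"
    have ab: "int a = n0" "int b = n1" "a + b = n" "1 \<le> b" "b \<le> a" using h assms(2) unfolding a_def b_def by auto
    have "g a b = 0" unfolding g_def using h ab by (simp add: min_def a_def b_def)
    then have "P a b" using main_g by blast
    then have "\<exists>i\<in>{1..?k}. int a - int b = d i (a+b)" using P_to_d[of b a ?k] ab kb(3) by simp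
    then show S3 unfolding S3_def using ab by simp
  next
    assume s: S3
    then have ge: "n0 \<ge> n1 \<and> n1 \<ge> 1" by (rule S3_ge)
    define a where "a = nat n0"
    define b where "b = nat n1"
    have ab: "int a = n0" "int b = n1" "a + b = n" "1 \<le> b" "b \<le> a" using ge assms(2) unfolding a_def b_def by auto
    obtain i where i: "i \<in> {1..?k}" "n0 - n1 = d i n" using s unfolding S3_def by blast
    have "P a b" using d_to_P[of i a b] i ab by simp
    then have "g a b = 0" using main_g by blast
    moreover have "min a b = b" using ab by simp
    ultimately have "int (f n) = n1 + int (f b) + int (f a)" unfolding g_def using ab by simp
    then show "int (f n) = n1 + int (f (nat n1)) + int (f (nat n0)) \<and> n0 \<ge> n1 \<and> n1 \<ge> 1"
      using ge unfolding a_def b_def by simp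
  qed
  show ?thesis using H F eq3 by blast
qed

end
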